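(* If $X$ is a Hausdorff space with basepoint $e$, then the James reduced product $J(X)$, with the operation of word concatenation, is a pre-$\Delta$-monoid.
   Context: The James reduced product of a based space $(X,e)$ is $J(X)=\coprod_{n\in\mathbb{N}}X^n/\sim$ where $\sim$ is generated by $(x_1,\dots,x_{j-1},e,x_{j+1},\dots,x_n)\sim(x_1,\dots,x_{j-1},x_{j+1},\dots,x_n)$; elements are finite words in $X\setminus\{e\}$ (with $e$ the empty word), and word concatenation makes $J(X)$ the free monoid on $(X,e)$. Topology: $X^n$ has the product topology, $J_n(X)=q(X^n)$ (words of length $\leq n$) has the quotient topology from $q_n:X^n\to J_n(X)$, and $J(X)$ has the weak (inductive limit) topology with respect to $\{J_n(X)\}$: $C\subseteq J(X)$ is closed iff $C\cap J_n(X)$ is closed in $J_n(X)$ for all $n$. A pre-$\Delta$-monoid is a space $M$ with an associative operation $\ast$ with identity such that for any continuous paths $\alpha,\beta:[0,1]\to M$, the pointwise product $t\mapsto\alpha(t)\ast\beta(t)$ is continuous. *)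

theory Defs
  imports "HOL-Analysis.Analysis"
begin

definition quotient_topology :: "'a topology \<Rightarrow> ('a \<Rightarrow> 'b) \<Rightarrow> 'b topology" where
  "quotient_topology X f = topology (\<lambda>U. U \<subseteq> f ` topspace X \<and> openin X {x \<in> topspace X. f x \<in> U})"

definition james_power :: "'a topology \<Rightarrow> nat \<Rightarrow> (nat \<Rightarrow> 'a) topology" where
  "james_power X n = product_topology (\<lambda>_. X) {..<n}"

text \<open>The quotient map q_n : X^n \<rightarrow> J(X): delete all occurrences of the basepoint.
  Elements of J(X) are reduced words, i.e. lists over topspace X - {e}.\<close>
definition james_q :: "'a \<Rightarrow> nat \<Rightarrow> (nat \<Rightarrow> 'a) \<Rightarrow> 'a list" where
  "james_q e n x = filter (\<lambda>a. a \<noteq> e) (map x [0..<n])"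

definition james_filtration :: "'a topology \<Rightarrow> 'a \<Rightarrow> nat \<Rightarrow> 'a list topology" where
  "james_filtration X e n = quotient_topology (james_power X n) (james_q e n)"

definition james_carrier :: "'a topology \<Rightarrow> 'a \<Rightarrow> 'a list set" where
  "james_carrier X e = (\<Union>n. topspace (james_filtration X e n))"

definition james_reduced_product :: "'a topology \<Rightarrow> 'a \<Rightarrow> 'a list topology" where
  "james_reduced_product X e = topology (\<lambda>U. U \<subseteq> james_carrier X e \<and>
     (\<forall>n. closedin (james_filtration X e n)
            ((james_carrier X e - U) \<inter> topspace (james_filtration X e n))))"

definition pre_delta_monoid :: "'m topology \<Rightarrow> ('m \<Rightarrow> 'm \<Rightarrow> 'm) \<Rightarrow> 'm \<Rightarrow> bool" where
  "pre_delta_monoid M mul one \<longleftrightarrow>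
     one \<in> topspace M \<and>
     (\<forall>a\<in>topspace M. \<forall>b\<in>topspace M. mul a b \<in> topspace M) \<and>
     (\<forall>a\<in>topspace M. \<forall>b\<in>topspace M. \<forall>c\<in>topspace M. mul (mul a b) c = mul a (mul b c)) \<and>
     (\<forall>a\<in>topspace M. mul one a = a \<and> mul a one = a) \<and>
     (\<forall>\<alpha> \<beta>. pathin M \<alpha> \<and> pathin M \<beta> \<longrightarrow> pathin M (\<lambda>t. mul (\<alpha> t) (\<beta> t)))"

end

theory Submission
  imports Defs
begin

lemma istopology_quot: "istopology (\<lambda>U. U \<subseteq> f ` topspace X \<and> openin X {x \<in> topspace X. f x \<in> U})"
  unfolding istopology_def
proof (rule conjI; intro allI impI)
  fix S T assume that: "S \<subseteq> f ` topspace X \<and> openin X {x \<in> topspace X. f x \<in> S}"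
     "T \<subseteq> f ` topspace X \<and> openin X {x \<in> topspace X. f x \<in> T}"
  have "{x \<in> topspace X. f x \<in> S \<inter> T} = {x \<in> topspace X. f x \<in> S} \<inter> {x \<in> topspace X. f x \<in> T}" by auto
  then show "S \<inter> T \<subseteq> f ` topspace X \<and> openin X {x \<in> topspace X. f x \<in> S \<inter> T}"
    using that by auto
next
  fix K assume "\<forall>S\<in>K. S \<subseteq> f ` topspace X \<and> openin X {x \<in> topspace X. f x \<in> S}"
  moreover have "{x \<in> topspace X. f x \<in> \<Union>K} = (\<Union>S\<in>K. {x \<in> topspace X. f x \<in> S})" by auto
  ultimately show "\<Union>K \<subseteq> f ` topspace X \<and> openin X {x \<in> topspace X. f x \<in> \<Union>K}"
    by auto
qed

lemma openin_quot: "openin (quotient_topology X f) U \<longleftrightarrow> U \<subseteq> f ` topspace X \<and> openin X {x \<in> topspace X. f x \<in> U}"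
  unfolding quotient_topology_def by (simp add: topology_inverse'[OF istopology_quot])

lemma topspace_quot: "topspace (quotient_topology X f) = f ` topspace X"
proof -
  have "openin (quotient_topology X f) (f ` topspace X)"
    unfolding openin_quot by (auto intro: back_subst[where P="openin X", OF openin_topspace])
  then show ?thesis using openin_subset[of "quotient_topology X f"] 
    by (metis (no_types, lifting) openin_quot openin_topspace subset_antisym)
qed

lemma closedin_quot: "closedin (quotient_topology X f) C \<longleftrightarrow> C \<subseteq> f ` topspace X \<and> closedin X {x \<in> topspace X. f x \<in> C}"
proof -
  have e: "{x \<in> topspace X. f x \<in> f ` topspace X - C} = topspace X - {x \<in> topspace X. f x \<in> C}" by auto
  show ?thesis unfolding closedin_def topspace_quot openin_quot e by auto
qed

lemma topspace_jpow: "topspace (james_power X n) = (\<Pi>\<^sub>E i\<in>{..<n}. topspace X)"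
  by (simp add: james_power_def)

lemma topspace_jfilt: "topspace (james_filtration X e n) = james_q e n ` (\<Pi>\<^sub>E i\<in>{..<n}. topspace X)"
  by (simp add: james_filtration_def topspace_quot topspace_jpow)

definition padw :: "'a \<Rightarrow> nat \<Rightarrow> 'a list \<Rightarrow> nat \<Rightarrow> 'a" where
  "padw e n w = (\<lambda>i. if i < length w then w!i else if i < n then e else undefined)"

lemma map_padw: "length w \<le> n \<Longrightarrow> map (padw e n w) [0..<n] = w @ replicate (n - length w) e"
proof (rule nth_equalityI)
  assume "length w \<le> n"
  then show "length (map (padw e n w) [0..<n]) = length (w @ replicate (n - length w) e)" by simp
  fix i assume "length w \<le> n" "i < length (map (padw e n w) [0..<n])"
  then show "map (padw e n w) [0..<n] ! i = (w @ replicate (n - length w) e) ! i"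
    by (auto simp: padw_def nth_append)
qed

lemma q_padw: "length w \<le> n \<Longrightarrow> e \<notin> set w \<Longrightarrow> james_q e n (padw e n w) = w"
  unfolding james_q_def using map_padw[of w n e]
  by (simp add: filter_id_conv) (metis filter_True)

lemma padw_in: "length w \<le> n \<Longrightarrow> set w \<subseteq> topspace X \<Longrightarrow> e \<in> topspace X \<Longrightarrow>
   padw e n w \<in> (\<Pi>\<^sub>E i\<in>{..<n}. topspace X)"
  by (auto simp: padw_def PiE_iff extensional_def)

lemma jfilt_mem: "e \<in> topspace X \<Longrightarrow> w \<in> topspace (james_filtration X e n) \<longleftrightarrow> set w \<subseteq> topspace X - {e} \<and> length w \<le> n"
proof
  assume "w \<in> topspace (james_filtration X e n)"
  then obtain x where x: "x \<in> (\<Pi>\<^sub>E i\<in>{..<n}. topspace X)" "w = james_q e n x"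
    by (auto simp: topspace_jfilt)
  have "length w \<le> length (map x [0..<n])" unfolding x james_q_def by (rule length_filter_le)
  moreover have "set w \<subseteq> topspace X - {e}" using x by (auto simp: james_q_def PiE_iff)
  ultimately show "set w \<subseteq> topspace X - {e} \<and> length w \<le> n" by simp
next
  assume e: "e \<in> topspace X" and w: "set w \<subseteq> topspace X - {e} \<and> length w \<le> n"
  then show "w \<in> topspace (james_filtration X e n)"
    unfolding topspace_jfilt using q_padw[of w n e] padw_in[of w n X e]
    by (metis Diff_empty Diff_insert0 image_eqI insert_Diff insert_subset subset_Diff_insert)
qed

lemma jcarrier: "e \<in> topspace X \<Longrightarrow> james_carrier X e = {w. set w \<subseteq> topspace X - {e}}"
  unfolding james_carrier_def using jfilt_mem[of e X] by auto

lemma jfilt_sub: "topspace (james_filtration X e n) \<subseteq> james_carrier X e"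
  unfolding james_carrier_def by auto

lemma istopology_J: "istopology (\<lambda>U. U \<subseteq> james_carrier X e \<and>
     (\<forall>n. closedin (james_filtration X e n)
            ((james_carrier X e - U) \<inter> topspace (james_filtration X e n))))"
  unfolding istopology_def
proof (intro conjI allI impI)
  fix S T n assume S: "S \<subseteq> james_carrier X e \<and> (\<forall>n. closedin (james_filtration X e n)
            ((james_carrier X e - S) \<inter> topspace (james_filtration X e n)))"
   and T: "T \<subseteq> james_carrier X e \<and> (\<forall>n. closedin (james_filtration X e n)
            ((james_carrier X e - T) \<inter> topspace (james_filtration X e n)))"
  show "S \<inter> T \<subseteq> james_carrier X e" using S by auto
  have "(james_carrier X e - S \<inter> T) \<inter> topspace (james_filtration X e n) =
     (james_carrier X e - S) \<inter> topspace (james_filtration X e n) \<union> (james_carrier X e - T) \<inter> topspace (james_filtration X e n)"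
    by auto
  then show "closedin (james_filtration X e n) ((james_carrier X e - S \<inter> T) \<inter> topspace (james_filtration X e n))"
    using S T by auto
next
  fix K n assume K: "\<forall>S\<in>K. S \<subseteq> james_carrier X e \<and> (\<forall>n. closedin (james_filtration X e n)
            ((james_carrier X e - S) \<inter> topspace (james_filtration X e n)))"
  then show "\<Union>K \<subseteq> james_carrier X e" by auto
  show "closedin (james_filtration X e n) ((james_carrier X e - \<Union>K) \<inter> topspace (james_filtration X e n))"
  proof (cases "K = {}")
    case True
    then show ?thesis using jfilt_sub[of X e n] by (simp add: Int_absorb1)
  next
    case False
    have eq: "(james_carrier X e - \<Union>K) \<inter> topspace (james_filtration X e n) =
       (\<Inter>S\<in>K. (james_carrier X e - S) \<inter> topspace (james_filtration X e n))" using False by auto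
    show ?thesis unfolding eq by (rule closedin_INT) (use K False in auto)
  qed
qed

lemma openin_J: "openin (james_reduced_product X e) U \<longleftrightarrow> U \<subseteq> james_carrier X e \<and>
     (\<forall>n. closedin (james_filtration X e n)
            ((james_carrier X e - U) \<inter> topspace (james_filtration X e n)))"
  unfolding james_reduced_product_def by (simp add: topology_inverse'[OF istopology_J])

lemma topspace_J: "topspace (james_reduced_product X e) = james_carrier X e"
proof -
  have "openin (james_reduced_product X e) (james_carrier X e)"
    unfolding openin_J by simp
  then show ?thesis
    by (metis openin_J openin_subset openin_topspace subset_antisym)
qed

lemma closedin_J: "closedin (james_reduced_product X e) C \<longleftrightarrow> C \<subseteq> james_carrier X e \<and>
     (\<forall>n. closedin (james_filtration X e n) (C \<inter> topspace (james_filtration X e n)))"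
proof -
  have "C \<subseteq> james_carrier X e \<Longrightarrow> james_carrier X e - (james_carrier X e - C) = C" by auto
  then show ?thesis unfolding closedin_def topspace_J openin_J by auto
qed

lemma filter_restrict_Q:
  assumes "\<And>j. j < n \<Longrightarrow> j \<notin> Q \<Longrightarrow> f j = e"
  shows "filter (\<lambda>a. a \<noteq> e) (map f [0..<n]) = filter (\<lambda>a. a \<noteq> e) (map f (filter (\<lambda>j. j \<in> Q) [0..<n]))"
proof -
  have "filter (\<lambda>j. f j \<noteq> e) [0..<n] = filter (\<lambda>j. f j \<noteq> e) (filter (\<lambda>j. j \<in> Q) [0..<n])"
    unfolding filter_filter by (rule filter_cong) (use assms in auto)
  then show ?thesis by (simp add: filter_map comp_def)
qed

lemma sorted_filter_upt: "sorted_wrt (<) (filter P [0..<n])"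
  by (simp add: sorted_wrt_filter)

lemma filter_reindex:
  assumes Q: "Q \<subseteq> {..<n}" and sm: "strict_mono_on Q \<sigma>" and sQ: "\<sigma> ` Q \<subseteq> {..<m}"
    and f: "\<And>j. j < n \<Longrightarrow> j \<notin> Q \<Longrightarrow> f j = e"
    and g: "\<And>i. i < m \<Longrightarrow> i \<notin> \<sigma> ` Q \<Longrightarrow> g i = e"
    and fg: "\<And>j. j \<in> Q \<Longrightarrow> f j = g (\<sigma> j)"
  shows "filter (\<lambda>a. a \<noteq> e) (map f [0..<n]) = filter (\<lambda>a. a \<noteq> e) (map g [0..<m])"
proof -
  let ?xs = "filter (\<lambda>j. j \<in> Q) [0..<n]"
  have m1: "map f ?xs = map g (map \<sigma> ?xs)" using fg by auto
  have s1: "sorted_wrt (<) (map \<sigma> ?xs)"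
    unfolding sorted_wrt_map
    by (rule sorted_wrt_mono_rel[OF _ sorted_filter_upt]) (use sm in \<open>auto simp: strict_mono_on_def\<close>)
  have s2: "sorted_wrt (<) (filter (\<lambda>i. i \<in> \<sigma> ` Q) [0..<m])" by (rule sorted_filter_upt)
  have st: "set (map \<sigma> ?xs) = set (filter (\<lambda>i. i \<in> \<sigma> ` Q) [0..<m])"
    using Q sQ by auto
  have "map \<sigma> ?xs = filter (\<lambda>i. i \<in> \<sigma> ` Q) [0..<m]"
    using s1 s2 st by (metis sorted_distinct_set_unique strict_sorted_iff)
  then show ?thesis
    using filter_restrict_Q[of n Q f e] filter_restrict_Q[of m "\<sigma> ` Q" g e] f g m1 by metis
qed

lemma ex_strict_map:
  fixes qs ps :: "nat list"
  assumes "sorted_wrt (<) qs" "sorted_wrt (<) ps" "length ps = length qs"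
  shows "\<exists>\<sigma>. strict_mono_on (set qs) \<sigma> \<and> map \<sigma> qs = ps"
  using assms
proof (induction qs arbitrary: ps)
  case Nil
  then show ?case by (auto simp: strict_mono_on_def)
next
  case (Cons q qs)
  then obtain p ps' where ps: "ps = p # ps'" by (cases ps) auto
  have "\<exists>\<sigma>. strict_mono_on (set qs) \<sigma> \<and> map \<sigma> qs = ps'"
    using Cons.IH Cons.prems ps by auto
  then obtain \<sigma> where \<sigma>: "strict_mono_on (set qs) \<sigma>" "map \<sigma> qs = ps'" by blast
  have qn: "q \<notin> set qs"
  proof
    assume a: "q \<in> set qs"
    have "\<forall>x\<in>set qs. q < x" using Cons.prems(1) by simp
    then have "q < q" using a by blast
    then show False by simp
  qed
  let ?s = "\<sigma>(q := p)"
  have "map ?s qs = ps'" using \<sigma> qn by (metis map_fun_upd)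
  moreover have "strict_mono_on (set (q # qs)) ?s"
  proof (rule strict_mono_onI)
    fix x y assume xy: "x \<in> set (q # qs)" "y \<in> set (q # qs)" "x < y"
    then have yq: "y \<in> set qs" using Cons.prems(1) by auto
    then have "\<sigma> y \<in> set ps'" using \<sigma>(2) by auto
    then have "p < \<sigma> y" using Cons.prems(2) ps by auto
    show "?s x < ?s y"
    proof (cases "x = q")
      case True
      then show ?thesis using \<open>p < \<sigma> y\<close> yq qn by auto
    next
      case False
      then have "x \<in> set qs" using xy by auto
      then show ?thesis using strict_mono_onD[OF \<sigma>(1) _ yq xy(3)] yq qn False by auto
    qed
  qed
  ultimately show ?case using ps by auto
qed

lemma proj_cont: "i < n \<Longrightarrow> continuous_map (product_topology (\<lambda>_. X) {..<n}) X (\<lambda>x. x i)"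
  using continuous_map_product_projection[of i "{..<n}" "\<lambda>_. X"] by simp

definition Sm :: "'a \<Rightarrow> nat \<Rightarrow> nat set \<Rightarrow> (nat \<Rightarrow> nat) \<Rightarrow> (nat \<Rightarrow> 'a) \<Rightarrow> nat \<Rightarrow> 'a" where
  "Sm e n Q \<sigma> z = (\<lambda>j. if j < n then (if j \<in> Q then z (\<sigma> j) else e) else undefined)"

lemma Sm_cont:
  assumes "\<sigma> ` Q \<subseteq> {..<n}" "e \<in> topspace X"
  shows "continuous_map (james_power X n) (james_power X n) (Sm e n Q \<sigma>)"
  unfolding james_power_def continuous_map_componentwise
proof (intro conjI ballI)
  show "Sm e n Q \<sigma> ` topspace (product_topology (\<lambda>_. X) {..<n}) \<subseteq> extensional {..<n}"
    by (auto simp: Sm_def extensional_def)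
  fix k assume k: "k \<in> {..<n}"
  show "continuous_map (product_topology (\<lambda>_. X) {..<n}) X (\<lambda>x. Sm e n Q \<sigma> x k)"
  proof (cases "k \<in> Q")
    case True
    then have "\<sigma> k \<in> {..<n}" using assms by auto
    then show ?thesis using k True
      by (simp add: Sm_def proj_cont)
  next
    case False
    then show ?thesis using k assms by (simp add: Sm_def)
  qed
qed

lemma cl_e:
  assumes t1: "t1_space X" and e: "e \<in> topspace X" and F: "F \<subseteq> {..<n}"
  shows "closedin (james_power X n) {z \<in> topspace (james_power X n). \<forall>i\<in>F. z i = e}"
proof (cases "F = {}")
  case True
  then show ?thesis by simp
next
  case False
  have eq: "{z \<in> topspace (james_power X n). \<forall>i\<in>F. z i = e} =
     (\<Inter>i\<in>F. {z \<in> topspace (james_power X n). z i \<in> {e}})" using False by auto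
  show ?thesis unfolding eq
  proof (rule closedin_INT[OF False])
    fix i assume "i \<in> F"
    then have "continuous_map (james_power X n) X (\<lambda>z. z i)"
      using F unfolding james_power_def by (auto intro: proj_cont)
    then show "closedin (james_power X n) {z \<in> topspace (james_power X n). z i \<in> {e}}"
      using closedin_t1_singleton[OF t1 e] by (rule closedin_continuous_map_preimage)
  qed
qed

lemma q_as_map: "james_q e n a = map a (filter (\<lambda>j. a j \<noteq> e) [0..<n])"
  unfolding james_q_def by (simp add: filter_map comp_def)

lemma q_closed_map:
  assumes t1: "t1_space X" and e: "e \<in> topspace X"
  shows "closed_map (james_power X n) (james_filtration X e n) (james_q e n)"
  unfolding closed_map_def
proof (intro allI impI)
  fix A assume A: "closedin (james_power X n) A"
  let ?T = "topspace (james_power X n)"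
  have AT: "A \<subseteq> ?T" using closedin_subset[OF A] .
  define I where "I = {(Q,\<sigma>). Q \<subseteq> {..<n} \<and> \<sigma> \<in> {..<n} \<rightarrow>\<^sub>E {..<n} \<and> strict_mono_on Q \<sigma>}"
  define piece where "piece = (\<lambda>(Q,\<sigma>). {z \<in> ?T. (\<forall>i\<in>{..<n} - \<sigma> ` Q. z i = e) \<and> Sm e n Q \<sigma> z \<in> A})"
  have finI: "finite I"
    by (rule finite_subset[of _ "Pow {..<n} \<times> ({..<n} \<rightarrow>\<^sub>E {..<n})"]) (auto simp: I_def finite_PiE)
  have clp: "closedin (james_power X n) (piece p)" if "p \<in> I" for p
  proof -
    obtain Q \<sigma> where p: "p = (Q, \<sigma>)" by (cases p)
    have Q: "Q \<subseteq> {..<n}" and \<sigma>: "\<sigma> \<in> {..<n} \<rightarrow>\<^sub>E {..<n}"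
      using that p by (auto simp: I_def)
    have sQ: "\<sigma> ` Q \<subseteq> {..<n}" using Q \<sigma> by auto
    have eq: "piece p = {z \<in> ?T. \<forall>i\<in>{..<n} - \<sigma> ` Q. z i = e} \<inter> {z \<in> ?T. Sm e n Q \<sigma> z \<in> A}"
      by (auto simp: piece_def p)
    show ?thesis unfolding eq
      by (intro closedin_Int cl_e[OF t1 e] closedin_continuous_map_preimage[OF Sm_cont[OF sQ e] A]) auto
  qed
  have seteq: "{x \<in> ?T. james_q e n x \<in> james_q e n ` A} = \<Union>(piece ` I)"
  proof (intro equalityI subsetI)
    fix x assume "x \<in> {x \<in> ?T. james_q e n x \<in> james_q e n ` A}"
    then obtain a where x: "x \<in> ?T" and a: "a \<in> A" and qa: "james_q e n x = james_q e n a" by auto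
    define qs where "qs = filter (\<lambda>j. a j \<noteq> e) [0..<n]"
    define ps where "ps = filter (\<lambda>j. x j \<noteq> e) [0..<n]"
    have mp: "map a qs = map x ps" using qa unfolding q_as_map qs_def ps_def by simp
    then have "length ps = length qs" by (metis length_map)
    then obtain \<sigma>0 where s0: "strict_mono_on (set qs) \<sigma>0" "map \<sigma>0 qs = ps"
      using ex_strict_map[of qs ps] unfolding qs_def ps_def by (auto simp: sorted_filter_upt)
    define Q where "Q = set qs"
    define \<sigma> where "\<sigma> = (\<lambda>j. if j \<in> Q then \<sigma>0 j else if j < n then 0 else undefined)"
    have Qn: "Q = {j. j < n \<and> a j \<noteq> e}" by (auto simp: Q_def qs_def)
    have sQ: "\<sigma> ` Q = {j. j < n \<and> x j \<noteq> e}"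
    proof -
      have "\<sigma> ` Q = \<sigma>0 ` set qs" by (auto simp: \<sigma>_def Q_def)
      also have "\<dots> = set ps" using s0(2) by (metis set_map)
      finally show ?thesis by (auto simp: ps_def)
    qed
    have ax: "a j = x (\<sigma>0 j)" if "j \<in> set qs" for j
      using mp s0(2) that by (metis (no_types, lifting) map_eq_conv map_map comp_apply)
    have inI: "(Q, \<sigma>) \<in> I"
    proof -
      have "\<sigma> \<in> {..<n} \<rightarrow>\<^sub>E {..<n}"
      proof
        fix j assume "j \<in> {..<n}"
        then show "\<sigma> j \<in> {..<n}" using sQ by (cases "j \<in> Q") (auto simp: \<sigma>_def)
      next
        fix j assume "j \<notin> {..<n}"
        then show "\<sigma> j = undefined" using Qn by (auto simp: \<sigma>_def)
      qed
      moreover have "strict_mono_on Q \<sigma>" using s0(1) by (auto simp: strict_mono_on_def \<sigma>_def Q_def)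
      moreover have "Q \<subseteq> {..<n}" using Qn by auto
      ultimately show ?thesis by (auto simp: I_def)
    qed
    have aT: "a \<in> ?T" using a AT by auto
    have "Sm e n Q \<sigma> x = a"
    proof
      fix j show "Sm e n Q \<sigma> x j = a j"
      proof (cases "j < n")
        case True
        then show ?thesis using ax Qn by (auto simp: Sm_def \<sigma>_def Q_def)
      next
        case False
        then show ?thesis using aT by (auto simp: Sm_def james_power_def PiE_iff extensional_def)
      qed
    qed
    then have "x \<in> piece (Q, \<sigma>)" using x sQ a by (auto simp: piece_def)
    then show "x \<in> \<Union>(piece ` I)" using inI by blast
  next
    fix x assume "x \<in> \<Union>(piece ` I)"
    then obtain Q \<sigma> where p: "(Q,\<sigma>) \<in> I" and x: "x \<in> piece (Q, \<sigma>)" by auto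
    have Q: "Q \<subseteq> {..<n}" "strict_mono_on Q \<sigma>" "\<sigma> ` Q \<subseteq> {..<n}" using p by (auto simp: I_def)
    have xT: "x \<in> ?T" and xe: "\<And>i. i < n \<Longrightarrow> i \<notin> \<sigma> ` Q \<Longrightarrow> x i = e" and xA: "Sm e n Q \<sigma> x \<in> A"
      using x by (auto simp: piece_def)
    have "james_q e n (Sm e n Q \<sigma> x) = james_q e n x"
      unfolding james_q_def
      by (rule filter_reindex[OF Q]) (use xe Q in \<open>auto simp: Sm_def\<close>)
    then show "x \<in> {x \<in> ?T. james_q e n x \<in> james_q e n ` A}" using xT xA by (metis (mono_tags, lifting) image_eqI mem_Collect_eq)
  qed
  show "closedin (james_filtration X e n) (james_q e n ` A)"
    unfolding james_filtration_def closedin_quot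
  proof
    show "james_q e n ` A \<subseteq> james_q e n ` topspace (james_power X n)" using AT by auto
    show "closedin (james_power X n) {x \<in> topspace (james_power X n). james_q e n x \<in> james_q e n ` A}"
      unfolding seteq by (rule closedin_Union) (use finI clp in auto)
  qed
qed

lemma q_proper:
  assumes t1: "t1_space X" and e: "e \<in> topspace X"
  shows "proper_map (james_power X n) (james_filtration X e n) (james_q e n)"
  unfolding proper_map_def
proof (intro conjI ballI q_closed_map[OF assms])
  fix w assume "w \<in> topspace (james_filtration X e n)"
  have sub: "{x \<in> topspace (james_power X n). james_q e n x = w} \<subseteq> {..<n} \<rightarrow>\<^sub>E insert e (set w)"
  proof
    fix x assume x: "x \<in> {x \<in> topspace (james_power X n). james_q e n x = w}"
    show "x \<in> {..<n} \<rightarrow>\<^sub>E insert e (set w)"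
    proof
      fix i assume i: "i \<in> {..<n}"
      show "x i \<in> insert e (set w)"
      proof (cases "x i = e")
        case False
        then have "x i \<in> set (james_q e n x)" using i by (auto simp: james_q_def)
        then show ?thesis using x by auto
      qed simp
    next
      fix i assume "i \<notin> {..<n}" then show "x i = undefined" using x by (auto simp: james_power_def PiE_iff extensional_def)
    qed
  qed
  show "compactin (james_power X n) {x \<in> topspace (james_power X n). james_q e n x = w}"
    by (rule finite_imp_compactin) (use finite_subset[OF sub] in \<open>auto simp: finite_PiE\<close>)
qed

lemma q_cong: "(\<And>i. i < n \<Longrightarrow> x i = y i) \<Longrightarrow> james_q e n x = james_q e n y"
proof -
  assume a: "\<And>i. i < n \<Longrightarrow> x i = y i"
  have m: "map x [0..<n] = map y [0..<n]" by (rule map_cong) (auto simp: a)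
  show ?thesis unfolding james_q_def m by (rule refl)
qed

lemma q_ext:
  assumes "n \<le> m" "\<And>i. n \<le> i \<Longrightarrow> i < m \<Longrightarrow> z i = e"
  shows "james_q e m z = james_q e n z"
proof -
  have "[0..<m] = [0..<n] @ [n..<m]" using upt_add_eq_append[of 0 n "m-n"] assms(1) by simp
  moreover have "filter (\<lambda>a. a \<noteq> e) (map z [n..<m]) = []" using assms(2) by (auto simp: filter_empty_conv)
  ultimately show ?thesis unfolding james_q_def by simp
qed

definition pad :: "'a \<Rightarrow> nat \<Rightarrow> nat \<Rightarrow> (nat \<Rightarrow> 'a) \<Rightarrow> nat \<Rightarrow> 'a" where
  "pad e n m y = (\<lambda>i. if i < n then y i else if i < m then e else undefined)"

lemma pad_cont:
  assumes "e \<in> topspace X" "n \<le> m"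
  shows "continuous_map (james_power X n) (james_power X m) (pad e n m)"
  unfolding james_power_def continuous_map_componentwise
proof (intro conjI ballI)
  show "pad e n m ` topspace (product_topology (\<lambda>_. X) {..<n}) \<subseteq> extensional {..<m}"
    using assms by (auto simp: pad_def extensional_def)
  fix k assume k: "k \<in> {..<m}"
  show "continuous_map (product_topology (\<lambda>_. X) {..<n}) X (\<lambda>x. pad e n m x k)"
  proof (cases "k < n")
    case True
    then show ?thesis by (simp add: pad_def proj_cont)
  next
    case False
    then show ?thesis using k assms by (simp add: pad_def)
  qed
qed

lemma q_pad: "n \<le> m \<Longrightarrow> james_q e m (pad e n m y) = james_q e n y"
  by (subst q_ext[of n m]) (auto simp: pad_def intro: q_cong)

lemma restr_cont:
  assumes "n \<le> m"
  shows "continuous_map (james_power X m) (james_power X n) (\<lambda>z. restrict z {..<n})"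
  unfolding james_power_def continuous_map_componentwise
  using assms by (auto intro: proj_cont)

lemma closedin_jfilt: "closedin (james_filtration X e n) C \<longleftrightarrow> C \<subseteq> topspace (james_filtration X e n) \<and>
   closedin (james_power X n) {x \<in> topspace (james_power X n). james_q e n x \<in> C}"
  unfolding james_filtration_def closedin_quot topspace_quot by simp

lemma jfilt_closed_J:
  assumes t1: "t1_space X" and e: "e \<in> topspace X" and C: "closedin (james_filtration X e n) C"
  shows "closedin (james_reduced_product X e) C"
  unfolding closedin_J
proof (intro conjI allI)
  have CT: "C \<subseteq> topspace (james_filtration X e n)" using closedin_subset[OF C] .
  then show "C \<subseteq> james_carrier X e" using jfilt_sub[of X e n] by blast
  have CA: "closedin (james_power X n) {y \<in> topspace (james_power X n). james_q e n y \<in> C}"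
    using C unfolding james_filtration_def closedin_quot by blast
  fix m
  show "closedin (james_filtration X e m) (C \<inter> topspace (james_filtration X e m))"
  proof (cases "m \<le> n")
    case True
    have eq: "{x \<in> topspace (james_power X m). james_q e m x \<in> C \<inter> topspace (james_filtration X e m)}
       = {x \<in> topspace (james_power X m). pad e m n x \<in> {y \<in> topspace (james_power X n). james_q e n y \<in> C}}"
    proof -
      have pT: "pad e m n x \<in> topspace (james_power X n)" if "x \<in> topspace (james_power X m)" for x
        using continuous_map_image_subset_topspace[OF pad_cont[OF e True]] that by blast
      have qT: "james_q e m x \<in> topspace (james_filtration X e m)" if "x \<in> topspace (james_power X m)" for x
        using that by (simp add: topspace_jfilt topspace_jpow)
      show ?thesis using pT qT q_pad[OF True, of e] by auto
    qed
    show ?thesis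
      unfolding closedin_jfilt
    proof
      show "C \<inter> topspace (james_filtration X e m) \<subseteq> topspace (james_filtration X e m)"
        by auto
      show "closedin (james_power X m) {x \<in> topspace (james_power X m). james_q e m x \<in> C \<inter> topspace (james_filtration X e m)}"
        unfolding eq by (rule closedin_continuous_map_preimage[OF pad_cont[OF e True] CA])
    qed
  next
    case False
    then have nm: "n \<le> m" by simp
    have CTm: "C \<subseteq> topspace (james_filtration X e m)" using CT nm by (auto simp: jfilt_mem[OF e])
    define B where "B = {z \<in> topspace (james_power X m). \<forall>i\<in>{..<m} - {..<n}. z i = e} \<inter>
        {z \<in> topspace (james_power X m). restrict z {..<n} \<in> {y \<in> topspace (james_power X n). james_q e n y \<in> C}}"
    have Bc: "closedin (james_power X m) B"
      unfolding B_def by (intro closedin_Int cl_e[OF t1 e] closedin_continuous_map_preimage[OF restr_cont[OF nm] CA]) auto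
    have "james_q e m ` B = C"
    proof (intro equalityI subsetI)
      fix w assume "w \<in> james_q e m ` B"
      then obtain z where z: "z \<in> B" "w = james_q e m z" by auto
      have "james_q e m z = james_q e n z" using z(1) by (intro q_ext[OF nm]) (auto simp: B_def)
      also have "\<dots> = james_q e n (restrict z {..<n})" by (rule q_cong) auto
      finally show "w \<in> C" using z by (auto simp: B_def)
    next
      fix w assume w: "w \<in> C"
      then obtain y where y: "y \<in> topspace (james_power X n)" "w = james_q e n y"
        using CT by (auto simp: topspace_jfilt topspace_jpow)
      have pT: "pad e n m y \<in> topspace (james_power X m)"
        using continuous_map_image_subset_topspace[OF pad_cont[OF e nm]] y(1) by auto
      have "restrict (pad e n m y) {..<n} = y"
        using y(1) by (auto simp: pad_def james_power_def PiE_iff extensional_def fun_eq_iff)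
      then have "pad e n m y \<in> B" using pT y w nm by (auto simp: B_def pad_def)
      then show "w \<in> james_q e m ` B" using q_pad[OF nm, of e y] y(2) by (metis image_eqI)
    qed
    then have "closedin (james_filtration X e m) C"
      using q_closed_map[OF t1 e, of m] Bc unfolding closed_map_def by metis
    then show ?thesis using CTm by (simp add: Int_absorb2)
  qed
qed

lemma singleton_closed_jfilt:
  assumes t1: "t1_space X" and e: "e \<in> topspace X" and w: "w \<in> topspace (james_filtration X e n)"
  shows "closedin (james_filtration X e n) {w}"
proof -
  obtain x where x: "x \<in> topspace (james_power X n)" "w = james_q e n x"
    using w by (auto simp: topspace_jfilt topspace_jpow)
  have "t1_space (james_power X n)"
    unfolding james_power_def t1_space_product_topology using t1 by simp
  then have "closedin (james_power X n) {x}" using x(1) by (rule closedin_t1_singleton)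
  then have "closedin (james_filtration X e n) (james_q e n ` {x})"
    using q_closed_map[OF t1 e] unfolding closed_map_def by blast
  then show ?thesis using x by simp
qed

lemma finite_closed_jfilt:
  assumes t1: "t1_space X" and e: "e \<in> topspace X" and F: "finite F" "F \<subseteq> topspace (james_filtration X e n)"
  shows "closedin (james_filtration X e n) F"
proof -
  have "F = \<Union>((\<lambda>w. {w}) ` F)" by auto
  moreover have "closedin (james_filtration X e n) (\<Union>((\<lambda>w. {w}) ` F))"
    by (rule closedin_Union) (use F singleton_closed_jfilt[OF t1 e] in auto)
  ultimately show ?thesis by simp
qed

lemma compact_in_filt:
  assumes t1: "t1_space X" and e: "e \<in> topspace X" and K: "compactin (james_reduced_product X e) K"
  shows "\<exists>n. K \<subseteq> topspace (james_filtration X e n)"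
proof (rule ccontr)
  assume "\<nexists>n. K \<subseteq> topspace (james_filtration X e n)"
  have KC: "K \<subseteq> james_carrier X e" using compactin_subset_topspace[OF K] by (simp add: topspace_J)
  have ex: "\<exists>k\<in>K. n < length k" for n
  proof -
    obtain k where k: "k \<in> K" "k \<notin> topspace (james_filtration X e n)"
      using \<open>\<nexists>n. K \<subseteq> topspace (james_filtration X e n)\<close> by blast
    then show ?thesis using KC jcarrier[OF e] jfilt_mem[OF e] by fastforce
  qed
  define f where "f n = (SOME k. k \<in> K \<and> n < length k)" for n
  have f: "f n \<in> K" "n < length (f n)" for n
    using someI_ex[OF ex[of n, unfolded Bex_def]] by (auto simp: f_def)
  define D where "D = range f"
  have DK: "D \<subseteq> K" using f by (auto simp: D_def)
  have infD: "infinite D"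
  proof
    assume "finite D"
    then obtain B where "\<forall>d\<in>D. length d \<le> B"
      using finite_nat_set_iff_bounded_le[of "length ` D"] by auto
    then have "length (f B) \<le> B" by (auto simp: D_def)
    then show False using f(2)[of B] by simp
  qed
  have clD: "closedin (james_reduced_product X e) C" if CD: "C \<subseteq> D" for C
    unfolding closedin_J
  proof (intro conjI allI)
    show "C \<subseteq> james_carrier X e" using CD DK KC by auto
    fix m
    have "C \<inter> topspace (james_filtration X e m) \<subseteq> f ` {..<m}"
    proof
      fix w assume w: "w \<in> C \<inter> topspace (james_filtration X e m)"
      then obtain j where j: "w = f j" using CD by (auto simp: D_def)
      have "length w \<le> m" using w jfilt_mem[OF e] by blast
      then have "j < m" using f(2)[of j] j by simp
      then show "w \<in> f ` {..<m}" using j by auto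
    qed
    then have "finite (C \<inter> topspace (james_filtration X e m))" by (rule finite_subset) simp
    then show "closedin (james_filtration X e m) (C \<inter> topspace (james_filtration X e m))"
      by (rule finite_closed_jfilt[OF t1 e]) auto
  qed
  define U where "U = (\<lambda>d. james_carrier X e - (D - {d})) ` D"
  have Uo: "\<forall>B\<in>U. openin (james_reduced_product X e) B"
  proof
    fix B assume "B \<in> U"
    then obtain d where d: "B = james_carrier X e - (D - {d})" by (auto simp: U_def)
    show "openin (james_reduced_product X e) B"
      unfolding d topspace_J[symmetric] by (rule openin_diff[OF openin_topspace clD]) auto
  qed
  have KU: "K \<subseteq> \<Union>U"
  proof
    fix k assume k: "k \<in> K"
    show "k \<in> \<Union>U"
    proof (cases "k \<in> D")
      case True
      then show ?thesis using k KC by (auto simp: U_def)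
    next
      case False
      then show ?thesis using k KC by (auto simp: U_def D_def)
    qed
  qed
  obtain F where F: "finite F" "F \<subseteq> U" "K \<subseteq> \<Union>F"
    using K Uo KU unfolding compactin_def by meson
  obtain G where G: "G \<subseteq> D" "finite G" "F = (\<lambda>d. james_carrier X e - (D - {d})) ` G"
    using finite_subset_image[OF F(1) F(2)[unfolded U_def]] by blast
  obtain d' where d': "d' \<in> D" "d' \<notin> G" using infD G(2)
    by (metis finite_subset subsetI)
  then have "d' \<in> \<Union>F" using DK F(3) by auto
  then obtain d where "d \<in> G" "d' \<in> james_carrier X e - (D - {d})" using G(3) by blast
  then show False using d' by blast
qed

lemma jfilt_J_cont:
  assumes t1: "t1_space X" and e: "e \<in> topspace X"
    and g: "continuous_map Y (james_reduced_product X e) g"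
    and sub: "g ` topspace Y \<subseteq> topspace (james_filtration X e n)"
  shows "continuous_map Y (james_filtration X e n) g"
  unfolding continuous_map_closedin
proof (intro conjI allI impI)
  show "g \<in> topspace Y \<rightarrow> topspace (james_filtration X e n)" using sub by auto
  fix C assume "closedin (james_filtration X e n) C"
  then have "closedin (james_reduced_product X e) C" by (rule jfilt_closed_J[OF t1 e])
  then show "closedin Y {x \<in> topspace Y. g x \<in> C}" using g unfolding continuous_map_closedin by blast
qed

lemma J_jfilt_cont:
  assumes g: "continuous_map Y (james_filtration X e n) g"
  shows "continuous_map Y (james_reduced_product X e) g"
  unfolding continuous_map_closedin
proof (intro conjI allI impI)
  show "g \<in> topspace Y \<rightarrow> topspace (james_reduced_product X e)"
    using continuous_map_image_subset_topspace[OF g] jfilt_sub[of X e n] by (auto simp: topspace_J)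
  fix C assume "closedin (james_reduced_product X e) C"
  then have c: "closedin (james_filtration X e n) (C \<inter> topspace (james_filtration X e n))"
    unfolding closedin_J by blast
  have "{x \<in> topspace Y. g x \<in> C} = {x \<in> topspace Y. g x \<in> C \<inter> topspace (james_filtration X e n)}"
    using continuous_map_image_subset_topspace[OF g] by auto
  then show "closedin Y {x \<in> topspace Y. g x \<in> C}"
    using g c unfolding continuous_map_closedin by metis
qed

lemma path_in_filt:
  assumes t1: "t1_space X" and e: "e \<in> topspace X" and p: "pathin (james_reduced_product X e) \<alpha>"
  shows "\<exists>n. continuous_map (subtopology euclideanreal {0..1}) (james_filtration X e n) \<alpha>"
proof -
  have c: "continuous_map (subtopology euclideanreal {0..1}) (james_reduced_product X e) \<alpha>"
    using p by (simp add: pathin_def)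
  have "compactin (subtopology euclideanreal {0..1}) {0..1}"
    by (simp add: compactin_subtopology)
  then have "compactin (james_reduced_product X e) (\<alpha> ` {0..1})"
    using image_compactin c by blast
  then obtain n where "\<alpha> ` {0..1} \<subseteq> topspace (james_filtration X e n)"
    using compact_in_filt[OF t1 e] by blast
  then show ?thesis using jfilt_J_cont[OF t1 e c] by auto
qed

definition joinp :: "nat \<Rightarrow> nat \<Rightarrow> (nat \<Rightarrow> 'a) \<times> (nat \<Rightarrow> 'a) \<Rightarrow> nat \<Rightarrow> 'a" where
  "joinp n m z = (\<lambda>i. if i < n then fst z i else if i < n + m then snd z (i - n) else undefined)"

lemma joinp_cont:
  "continuous_map (prod_topology (james_power X n) (james_power X m)) (james_power X (n + m)) (joinp n m)"
  unfolding james_power_def continuous_map_componentwise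
proof (intro conjI ballI)
  show "joinp n m ` topspace (prod_topology (product_topology (\<lambda>_. X) {..<n}) (product_topology (\<lambda>_. X) {..<m}))
    \<subseteq> extensional {..<n + m}"
    by (auto simp: joinp_def extensional_def)
  fix k assume k: "k \<in> {..<n + m}"
  show "continuous_map (prod_topology (product_topology (\<lambda>_. X) {..<n}) (product_topology (\<lambda>_. X) {..<m})) X
          (\<lambda>x. joinp n m x k)"
  proof (cases "k < n")
    case True
    have "continuous_map (prod_topology (product_topology (\<lambda>_. X) {..<n}) (product_topology (\<lambda>_. X) {..<m})) X
          ((\<lambda>x. x k) \<circ> fst)"
      by (rule continuous_map_compose[OF continuous_map_fst proj_cont[OF True]])
    then show ?thesis using True by (simp add: joinp_def comp_def)
  next
    case False
    then have km: "k - n < m" using k by auto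
    have "continuous_map (prod_topology (product_topology (\<lambda>_. X) {..<n}) (product_topology (\<lambda>_. X) {..<m})) X
          ((\<lambda>x. x (k - n)) \<circ> snd)"
      by (rule continuous_map_compose[OF continuous_map_snd proj_cont[OF km]])
    then show ?thesis using False k by (simp add: joinp_def comp_def)
  qed
qed

lemma map_joinp: "map (joinp n m z) [0..<n + m] = map (fst z) [0..<n] @ map (snd z) [0..<m]"
  by (rule nth_equalityI) (auto simp: joinp_def nth_append)

lemma q_joinp: "james_q e (n + m) (joinp n m z) = james_q e n (fst z) @ james_q e m (snd z)"
  unfolding james_q_def map_joinp by simp

lemma mult_cont:
  assumes t1: "t1_space X" and e: "e \<in> topspace X"
  shows "continuous_map (prod_topology (james_filtration X e n) (james_filtration X e m))
            (james_filtration X e (n + m)) (\<lambda>(u, v). u @ v)"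
  unfolding continuous_map_closedin
proof (intro conjI allI impI)
  show "(\<lambda>(u, v). u @ v) \<in> topspace (prod_topology (james_filtration X e n) (james_filtration X e m))
     \<rightarrow> topspace (james_filtration X e (n + m))"
    by (auto simp: jfilt_mem[OF e])
  fix C assume C: "closedin (james_filtration X e (n + m)) C"
  let ?P = "prod_topology (james_power X n) (james_power X m)"
  let ?p = "\<lambda>(x, y). (james_q e n x, james_q e m y)"
  have pr: "proper_map ?P (prod_topology (james_filtration X e n) (james_filtration X e m)) ?p"
    unfolding proper_map_prod using q_proper[OF t1 e] by blast
  have A: "closedin ?P {z \<in> topspace ?P. joinp n m z \<in> {y \<in> topspace (james_power X (n + m)). james_q e (n + m) y \<in> C}}"
    by (rule closedin_continuous_map_preimage[OF joinp_cont]) (use C in \<open>simp add: closedin_jfilt\<close>)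
  have pT: "joinp n m z \<in> topspace (james_power X (n + m))" if "z \<in> topspace ?P" for z
    using continuous_map_image_subset_topspace[OF joinp_cont] that by blast
  have eq: "{x \<in> topspace (prod_topology (james_filtration X e n) (james_filtration X e m)). (case x of (u, v) \<Rightarrow> u @ v) \<in> C}
     = ?p ` {z \<in> topspace ?P. joinp n m z \<in> {y \<in> topspace (james_power X (n + m)). james_q e (n + m) y \<in> C}}"
  proof (intro equalityI subsetI)
    fix x assume x: "x \<in> {x \<in> topspace (prod_topology (james_filtration X e n) (james_filtration X e m)). (case x of (u, v) \<Rightarrow> u @ v) \<in> C}"
    obtain u v where uv: "x = (u, v)" by (cases x)
    obtain a where a: "a \<in> topspace (james_power X n)" "u = james_q e n a"
      using x uv by (auto simp: topspace_jfilt topspace_jpow)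
    obtain b where b: "b \<in> topspace (james_power X m)" "v = james_q e m b"
      using x uv by (auto simp: topspace_jfilt topspace_jpow)
    have "(a, b) \<in> topspace ?P" using a b by simp
    moreover have "james_q e (n + m) (joinp n m (a, b)) \<in> C" using x uv a b by (simp add: q_joinp)
    ultimately show "x \<in> ?p ` {z \<in> topspace ?P. joinp n m z \<in> {y \<in> topspace (james_power X (n + m)). james_q e (n + m) y \<in> C}}"
      using pT uv a b by (auto intro!: image_eqI[of _ _ "(a, b)"])
  next
    fix x assume "x \<in> ?p ` {z \<in> topspace ?P. joinp n m z \<in> {y \<in> topspace (james_power X (n + m)). james_q e (n + m) y \<in> C}}"
    then obtain a b where ab: "(a, b) \<in> topspace ?P" "james_q e (n + m) (joinp n m (a, b)) \<in> C"
       "x = (james_q e n a, james_q e m b)" by auto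
    then show "x \<in> {x \<in> topspace (prod_topology (james_filtration X e n) (james_filtration X e m)). (case x of (u, v) \<Rightarrow> u @ v) \<in> C}"
      by (auto simp: q_joinp topspace_jfilt topspace_jpow)
  qed
  show "closedin (prod_topology (james_filtration X e n) (james_filtration X e m))
          {x \<in> topspace (prod_topology (james_filtration X e n) (james_filtration X e m)). (case x of (u, v) \<Rightarrow> u @ v) \<in> C}"
    unfolding eq using proper_imp_closed_map[OF pr] A unfolding closed_map_def by blast
qed

theorem mainTheorem15:
  fixes X :: "'a topology" and e :: 'a
  assumes "Hausdorff_space X" and "e \<in> topspace X"
  shows "pre_delta_monoid (james_reduced_product X e) (@) []"
proof -
  have t1: "t1_space X" using assms(1) by (rule Hausdorff_imp_t1_space)
  note e = assms(2)
  have paths: "pathin (james_reduced_product X e) (\<lambda>t. \<alpha> t @ \<beta> t)"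
    if a: "pathin (james_reduced_product X e) \<alpha>" and b: "pathin (james_reduced_product X e) \<beta>" for \<alpha> \<beta>
  proof -
    obtain n where n: "continuous_map (subtopology euclideanreal {0..1}) (james_filtration X e n) \<alpha>"
      using path_in_filt[OF t1 e a] by blast
    obtain m where m: "continuous_map (subtopology euclideanreal {0..1}) (james_filtration X e m) \<beta>"
      using path_in_filt[OF t1 e b] by blast
    have "continuous_map (subtopology euclideanreal {0..1}) (prod_topology (james_filtration X e n) (james_filtration X e m))
       (\<lambda>t. (\<alpha> t, \<beta> t))" using n m by (rule continuous_map_pairedI)
    then have "continuous_map (subtopology euclideanreal {0..1}) (james_filtration X e (n + m))
       ((\<lambda>(u, v). u @ v) \<circ> (\<lambda>t. (\<alpha> t, \<beta> t)))"
      using mult_cont[OF t1 e] by (rule continuous_map_compose)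
    then have "continuous_map (subtopology euclideanreal {0..1}) (james_filtration X e (n + m)) (\<lambda>t. \<alpha> t @ \<beta> t)"
      by (simp add: comp_def)
    then show ?thesis unfolding pathin_def by (rule J_jfilt_cont)
  qed
  show ?thesis
    unfolding pre_delta_monoid_def topspace_J jcarrier[OF e]
    using paths by auto
qed

end
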